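(* Let $\mathcal N$ be a $d$-dimensional real normed space with norm $\|\cdot\|$, let $k\in\mathbb N$, and let $c_1,\dots,c_n$ be $n$ distinct points of $\mathcal N$ with $n\geq k+1$. Then the $k$-th closed sphere-of-influence graph on $\{c_1,\dots,c_n\}$ has at most $(\vartheta(\mathcal N)k-1)\,n\leq(5^dk-1)\,n$ edges.
   Context: For $c\in\mathcal N$ and $r\geq 0$, $B(c,r)=\{x\in\mathcal N:\|x-c\|\leq r\}$ is the closed ball. For each $i\in\{1,\dots,n\}$, let $r_i^{(k)}$ be the smallest $r$ such that the set $\{j\in\{1,\dots,n\}: j\neq i,\ \|c_i-c_j\|\leq r\}$ has at least $k$ elements. The $k$-th closed sphere-of-influence graph on $\{c_1,\dots,c_n\}$ has vertex set $\{c_1,\dots,c_n\}$, and $c_i$, $c_j$ ($i\neq j$) are adjacent whenever $B(c_i,r_i^{(k)})\cap B(c_j,r_j^{(k)})\neq\emptyset$. The quantity $\vartheta(\mathcal N)$ is the largest number of points in the ball $B(o,2)$ ($o$ the origin) such that any two of the points are at distance at least $1$ and one of the points is $o$. *)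

theory Defs
  imports "HOL-Analysis.Analysis"
begin

definition closed_ball :: "'a::real_normed_vector \<Rightarrow> real \<Rightarrow> 'a set" where
  "closed_ball c r = {x. norm (x - c) \<le> r}"

definition soi_radius :: "nat \<Rightarrow> nat \<Rightarrow> (nat \<Rightarrow> 'a::real_normed_vector) \<Rightarrow> nat \<Rightarrow> real" where
  "soi_radius k n c i =
     Inf {r. r \<ge> 0 \<and> card {j \<in> {1..n}. j \<noteq> i \<and> norm (c i - c j) \<le> r} \<ge> k}"

definition soi_adj :: "nat \<Rightarrow> nat \<Rightarrow> (nat \<Rightarrow> 'a::real_normed_vector) \<Rightarrow> nat \<Rightarrow> nat \<Rightarrow> bool" where
  "soi_adj k n c i j \<longleftrightarrow> i \<in> {1..n} \<and> j \<in> {1..n} \<and> i \<noteq> j \<and>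
     closed_ball (c i) (soi_radius k n c i) \<inter> closed_ball (c j) (soi_radius k n c j) \<noteq> {}"

text \<open>Edge set of the k-th closed sphere-of-influence graph (unordered pairs of indices;
  the points are distinct, so this is the edge set on the points).\<close>
definition soi_edges :: "nat \<Rightarrow> nat \<Rightarrow> (nat \<Rightarrow> 'a::real_normed_vector) \<Rightarrow> nat set set" where
  "soi_edges k n c = {{i, j} | i j. soi_adj k n c i j}"

definition theta :: "'a::real_normed_vector itself \<Rightarrow> nat" where
  "theta _ = Sup {card S | S :: 'a set. finite S \<and> 0 \<in> S \<and> S \<subseteq> closed_ball 0 2 \<and>
       (\<forall>x\<in>S. \<forall>y\<in>S. x \<noteq> y \<longrightarrow> norm (x - y) \<ge> 1)}"

end

theory Submission
  imports Defs
begin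

lemma lborel_affine_pre:
  fixes c a :: real
  assumes c: "c > 0" and A: "A \<in> sets borel"
  shows "ennreal c * emeasure lborel ((\<lambda>y. a + c * y) -` A) = emeasure lborel A"
proof -
  have m: "(\<lambda>y. a + c * y) \<in> borel_measurable borel" by measurable
  have "emeasure lborel A = emeasure (density (distr lborel borel (\<lambda>y. a + c * y)) (\<lambda>_. ennreal \<bar>c\<bar>)) A"
    using lborel_real_affine[of c a] c by simp
  also have "\<dots> = (\<integral>\<^sup>+x. ennreal c * indicator A x \<partial>distr lborel borel (\<lambda>y. a + c * y))"
    using A c by (subst emeasure_density) (auto simp: mult.commute)
  also have "\<dots> = ennreal c * emeasure (distr lborel borel (\<lambda>y. a + c * y)) A"
    using A by (subst nn_integral_cmult_indicator) auto
  also have "\<dots> = ennreal c * emeasure lborel ((\<lambda>y. a + c * y) -` A)"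
    using A m by (subst emeasure_distr) auto
  finally show ?thesis ..
qed

lemma pre_borel:
  fixes a c :: real
  assumes "A \<in> sets borel"
  shows "(\<lambda>y. a + c * y) -` A \<in> sets borel"
proof -
  have m: "(\<lambda>y. a + c * y) \<in> borel_measurable borel" by measurable
  show ?thesis using measurable_sets_borel[OF m assms] by simp
qed

lemma affine_PiM:
  fixes I :: "nat set" and c :: real and \<alpha> :: "nat \<Rightarrow> real"
  assumes I: "finite I" and c: "c > 0" and X: "X \<in> sets (PiM I (\<lambda>_. lborel))"
  shows "emeasure (PiM I (\<lambda>_. lborel)) X = ennreal (c ^ card I) *
      emeasure (PiM I (\<lambda>_. lborel)) ((\<lambda>x. \<lambda>i\<in>I. \<alpha> i + c * x i) -` X \<inter> space (PiM I (\<lambda>_. lborel)))"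
proof -
  interpret product_sigma_finite "\<lambda>_. lborel" by standard
  define P where "P = PiM I (\<lambda>_. lborel :: real measure)"
  define \<phi> where "\<phi> = (\<lambda>x::nat\<Rightarrow>real. \<lambda>i\<in>I. \<alpha> i + c * x i)"
  have \<phi>m: "\<phi> \<in> measurable P P"
    unfolding \<phi>_def P_def by measurable
  have eq: "scale_measure (ennreal (c ^ card I)) (distr P P \<phi>) = P"
    unfolding P_def
  proof (rule PiM_eqI[OF I])
    show "sets (scale_measure (ennreal (c ^ card I)) (distr (Pi\<^sub>M I (\<lambda>_. lborel)) (Pi\<^sub>M I (\<lambda>_. lborel)) \<phi>)) = sets (Pi\<^sub>M I (\<lambda>_. lborel))"
      by simp
  next
    fix A assume A: "\<And>i. i \<in> I \<Longrightarrow> A i \<in> sets (lborel :: real measure)"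
    have pre: "\<phi> -` Pi\<^sub>E I A \<inter> space P = Pi\<^sub>E I (\<lambda>i. (\<lambda>y. \<alpha> i + c * y) -` A i)"
      unfolding \<phi>_def P_def by (auto simp: space_PiM PiE_def Pi_def extensional_def)
    have "emeasure (scale_measure (ennreal (c ^ card I)) (distr P P \<phi>)) (Pi\<^sub>E I A)
        = ennreal (c ^ card I) * emeasure P (Pi\<^sub>E I (\<lambda>i. (\<lambda>y. \<alpha> i + c * y) -` A i))"
      using A \<phi>m by (simp add: emeasure_distr pre[symmetric] P_def sets_PiM_I_finite I)
    also have "\<dots> = ennreal (c ^ card I) * (\<Prod>i\<in>I. emeasure lborel ((\<lambda>y. \<alpha> i + c * y) -` A i))"
      unfolding P_def using A by (subst emeasure_PiM[OF I]) (auto intro: pre_borel)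
    also have "\<dots> = (\<Prod>i\<in>I. ennreal c * emeasure lborel ((\<lambda>y. \<alpha> i + c * y) -` A i))"
      using c by (simp add: prod.distrib ennreal_power)
    also have "\<dots> = (\<Prod>i\<in>I. emeasure lborel (A i))"
      using A c by (intro prod.cong refl lborel_affine_pre) auto
    finally show "emeasure (scale_measure (ennreal (c ^ card I)) (distr (Pi\<^sub>M I (\<lambda>_. lborel)) (Pi\<^sub>M I (\<lambda>_. lborel)) \<phi>)) (Pi\<^sub>E I A) = (\<Prod>i\<in>I. emeasure lborel (A i))"
      by (simp add: P_def)
  qed
  have "emeasure P X = emeasure (scale_measure (ennreal (c ^ card I)) (distr P P \<phi>)) X"
    by (simp add: eq)
  also have "\<dots> = ennreal (c ^ card I) * emeasure P (\<phi> -` X \<inter> space P)"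
    using X \<phi>m by (simp add: emeasure_distr P_def)
  finally show ?thesis by (simp add: P_def \<phi>_def)
qed

lemma coord_lower_bound:
  fixes b :: "nat \<Rightarrow> 'a::real_normed_vector"
  assumes indep: "\<And>x. (\<Sum>i<d. x i *\<^sub>R b i) = 0 \<Longrightarrow> \<forall>i<d. x i = 0"
  shows "\<exists>m>0. \<forall>x. m * (\<Sum>i<d. \<bar>x i\<bar>) \<le> norm (\<Sum>i<d. x i *\<^sub>R b i)"
proof (rule ccontr)
  define E where "E = (\<lambda>x::nat\<Rightarrow>real. \<Sum>i<d. x i *\<^sub>R b i)"
  assume "\<not> ?thesis"
  then have H: "\<forall>m>0. \<exists>x. norm (E x) < m * (\<Sum>i<d. \<bar>x i\<bar>)"
    unfolding E_def by (auto simp: not_le)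
  have "\<exists>y. (\<Sum>i<d. \<bar>y i\<bar>) = 1 \<and> norm (E y) < 1 / (real k + 1)" for k
  proof -
    obtain x where x: "norm (E x) < (1 / (real k + 1)) * (\<Sum>i<d. \<bar>x i\<bar>)"
      using H[rule_format, of "1 / (real k + 1)"] by auto
    define s where "s = (\<Sum>i<d. \<bar>x i\<bar>)"
    have "0 < (1 / (real k + 1)) * s" using x unfolding s_def by (meson le_less_trans norm_ge_zero)
    then have s0: "s > 0" by (simp add: zero_less_divide_iff)
    define y where "y = (\<lambda>i. x i / s)"
    have "(\<Sum>i<d. \<bar>y i\<bar>) = (\<Sum>i<d. \<bar>x i\<bar>) / s"
      unfolding y_def using s0 by (simp add: sum_divide_distrib)
    also have "\<dots> = 1" using s0 s_def by simp
    finally have 1: "(\<Sum>i<d. \<bar>y i\<bar>) = 1" .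
    have "E y = (1/s) *\<^sub>R E x"
      unfolding E_def y_def by (simp add: scaleR_sum_right divide_inverse mult.commute)
    then have "norm (E y) = norm (E x) / s" using s0 by simp
    also have "\<dots> < 1 / (real k + 1)" using x s0 unfolding s_def[symmetric]
      by (simp add: divide_less_eq)
    finally show ?thesis using 1 by blast
  qed
  then obtain y where y1: "\<And>k. (\<Sum>i<d. \<bar>y k i\<bar>) = 1"
    and y2: "\<And>k. norm (E (y k)) < 1 / (real k + 1)" by metis
  have bnd: "bounded ((\<lambda>x. x i) ` range y)" if "i \<in> {..<d}" for i
  proof -
    have "\<bar>y k i\<bar> \<le> 1" for k
      using y1[of k] member_le_sum[of i "{..<d}" "\<lambda>i. \<bar>y k i\<bar>"] that by auto
    then show ?thesis unfolding bounded_iff by auto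
  qed
  have "\<forall>\<delta>\<subseteq>{..<d}. \<exists>l::nat\<Rightarrow>real. \<exists>r::nat\<Rightarrow>nat.
    strict_mono r \<and> (\<forall>\<epsilon>>0. eventually (\<lambda>n. \<forall>i\<in>\<delta>. dist (y (r n) i) (l i) < \<epsilon>) sequentially)"
    by (rule compact_lemma_general[where unproj = "\<lambda>x. x" and proj = "\<lambda>x i. x i"]) (use bnd in auto)
  then obtain l r where r: "strict_mono r"
    and conv: "\<And>\<epsilon>. \<epsilon> > 0 \<Longrightarrow> eventually (\<lambda>n. \<forall>i\<in>{..<d}. dist (y (r n) i) (l i) < \<epsilon>) sequentially"
    by blast
  have ci: "(\<lambda>n. y (r n) i) \<longlonglongrightarrow> l i" if "i < d" for i
    unfolding tendsto_iff using that by (auto intro: eventually_mono[OF conv])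
  have "(\<lambda>n. \<Sum>i<d. \<bar>y (r n) i\<bar>) \<longlonglongrightarrow> (\<Sum>i<d. \<bar>l i\<bar>)"
    by (intro tendsto_sum tendsto_rabs ci) auto
  then have L1: "(\<Sum>i<d. \<bar>l i\<bar>) = 1" using y1 by (simp add: LIMSEQ_const_iff)
  have "(\<lambda>n. E (y (r n))) \<longlonglongrightarrow> E l"
    unfolding E_def by (intro tendsto_sum tendsto_scaleR ci tendsto_const) auto
  then have A: "(\<lambda>n. norm (E (y (r n)))) \<longlonglongrightarrow> norm (E l)" by (rule tendsto_norm)
  have B: "(\<lambda>n. norm (E (y (r n)))) \<longlonglongrightarrow> 0"
  proof (rule tendsto_sandwich[where f="\<lambda>_. 0" and h="\<lambda>n. 1 / (real n + 1)"])
    show "\<forall>\<^sub>F n in sequentially. 0 \<le> norm (E (y (r n)))" by simp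
    show "\<forall>\<^sub>F n in sequentially. norm (E (y (r n))) \<le> 1 / (real n + 1)"
    proof (intro always_eventually allI)
      fix n
      have "n \<le> r n" using r by (rule seq_suble)
      then have "1 / (real (r n) + 1) \<le> 1 / (real n + 1)" by (simp add: frac_le)
      then show "norm (E (y (r n))) \<le> 1 / (real n + 1)" using y2[of "r n"] by linarith
    qed
    show "(\<lambda>n. 1 / (real n + 1)) \<longlonglongrightarrow> 0" using LIMSEQ_inverse_real_of_nat by (simp add: inverse_eq_divide add.commute)
  qed simp
  have "norm (E l) = 0" using LIMSEQ_unique[OF A B] .
  then have "\<forall>i<d. l i = 0" using indep unfolding E_def by simp
  then have "(\<Sum>i<d. \<bar>l i\<bar>) = 0" by simp
  with L1 show False by simp
qed

lemma packing:
  fixes b :: "nat \<Rightarrow> 'a::real_normed_vector" and S :: "'a set"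
  assumes indep: "\<And>x. (\<Sum>i<d. x i *\<^sub>R b i) = 0 \<Longrightarrow> \<forall>i<d. x i = 0"
    and spans: "\<And>v. \<exists>x. v = (\<Sum>i<d. x i *\<^sub>R b i)"
    and S: "finite S" "\<And>s. s \<in> S \<Longrightarrow> norm s \<le> 2"
       "\<And>x y. x \<in> S \<Longrightarrow> y \<in> S \<Longrightarrow> x \<noteq> y \<Longrightarrow> norm (x - y) \<ge> 1"
  shows "card S \<le> 5 ^ d"
proof -
  define I where "I = {..<d}"
  define P where "P = PiM I (\<lambda>_. lborel :: real measure)"
  define E where "E = (\<lambda>x::nat\<Rightarrow>real. \<Sum>i<d. x i *\<^sub>R b i)"
  define V where "V = (\<lambda>a r. {x \<in> space P. norm (E x - a) < r})"
  have fI: "finite I" and cI: "card I = d" unfolding I_def by auto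
  have comp: "(\<lambda>x. x i) \<in> borel_measurable P" if "i \<in> I" for i
  proof -
    have "(\<lambda>x. x i) \<in> measurable P lborel" unfolding P_def using that by (rule measurable_component_singleton)
    then show ?thesis by simp
  qed
  have spP: "x \<in> space P \<Longrightarrow> x i = undefined" if "i \<notin> I" for x i
    using that unfolding P_def by (auto simp: space_PiM PiE_def extensional_def)
  have idm: "(\<lambda>x. x) \<in> measurable P (borel :: (nat \<Rightarrow> real) measure)"
  proof -
    have "(\<lambda>x. x) \<in> measurable P (PiM UNIV (\<lambda>_. borel :: real measure))"
    proof (rule measurable_PiM_single')
      fix i :: nat
      show "(\<lambda>x. x i) \<in> borel_measurable P"
      proof (cases "i \<in> I")
        case True then show ?thesis by (rule comp)
      next
        case False
        show ?thesis by (subst measurable_cong[where g="\<lambda>x. undefined"]) (auto simp: spP[OF False])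
      qed
    qed auto
    then show ?thesis using measurable_cong_sets[OF refl sets_PiM_equal_borel] by blast
  qed
  have Vm: "V a r \<in> sets P" for a r
  proof -
    have "continuous_on UNIV (\<lambda>x::nat\<Rightarrow>real. norm (E x - a))"
      unfolding E_def by (intro continuous_intros continuous_on_product_coordinates)
    then have "(\<lambda>x::nat\<Rightarrow>real. norm (E x - a)) \<in> borel_measurable borel"
      by (rule borel_measurable_continuous_onI)
    then have "(\<lambda>x. norm (E x - a)) \<in> borel_measurable P"
      using measurable_comp[OF idm] by (simp add: o_def)
    then show ?thesis unfolding V_def by measurable
  qed
  have trans: "emeasure P (V a r) = emeasure P (V 0 r)" for a r
  proof -
    obtain \<alpha> where \<alpha>: "a = E \<alpha>" using spans unfolding E_def by blast
    have E\<psi>: "E (\<lambda>i\<in>I. - \<alpha> i + 1 * x i) = E x - a" for x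
      unfolding E_def \<alpha> I_def by (simp add: algebra_simps sum_subtractf scaleR_diff_left)
    have "(\<lambda>x. \<lambda>i\<in>I. - \<alpha> i + 1 * x i) -` V 0 r \<inter> space P = V a r"
      unfolding V_def using E\<psi> by (auto simp: P_def space_PiM)
    then show ?thesis
      using affine_PiM[OF fI, of 1 "V 0 r" "\<lambda>i. - \<alpha> i"] Vm unfolding P_def by simp
  qed
  have scal: "emeasure P (V 0 (5 * r)) = ennreal (5 ^ d) * emeasure P (V 0 r)" for r
  proof -
    have E\<psi>: "E (\<lambda>i\<in>I. 0 + (1/5) * x i) = (1/5) *\<^sub>R E x" for x
      unfolding E_def I_def by (simp add: scaleR_sum_right)
    have "(\<lambda>x. \<lambda>i\<in>I. 0 + (1/5) * x i) -` V 0 r \<inter> space P = V 0 (5 * r)"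
      unfolding V_def using E\<psi> by (auto simp: P_def space_PiM)
    then have "emeasure P (V 0 r) = ennreal ((1/5) ^ d) * emeasure P (V 0 (5 * r))"
      using affine_PiM[OF fI, of "1/5" "V 0 r" "\<lambda>i. 0"] Vm cI unfolding P_def by simp
    then have "ennreal (5 ^ d) * emeasure P (V 0 r) = ennreal (5 ^ d) * ennreal ((1/5) ^ d) * emeasure P (V 0 (5 * r))"
      by (simp add: mult.assoc)
    also have "ennreal (5 ^ d) * ennreal ((1/5) ^ d) = 1"
      by (simp add: ennreal_mult'[symmetric] power_mult_distrib[symmetric])
    finally show ?thesis by simp
  qed
  define \<sigma> where "\<sigma> = (\<Sum>i<d. norm (b i))"
  define \<delta> where "\<delta> = 1 / (2 * (\<sigma> + 1))"
  have \<sigma>0: "\<sigma> \<ge> 0" unfolding \<sigma>_def by (simp add: sum_nonneg)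
  have \<delta>0: "\<delta> > 0" unfolding \<delta>_def using \<sigma>0 by simp
  have normE: "norm (E x) \<le> (\<Sum>i<d. \<bar>x i\<bar> * norm (b i))" for x
    unfolding E_def by (rule order_trans[OF norm_sum]) simp
  have boxsub: "PiE I (\<lambda>_. {-\<delta><..<\<delta>}) \<subseteq> V 0 (1/2)"
  proof
    fix x assume x: "x \<in> PiE I (\<lambda>_. {-\<delta><..<\<delta>})"
    have "norm (E x) \<le> (\<Sum>i<d. \<bar>x i\<bar> * norm (b i))" by (rule normE)
    also have "\<dots> \<le> (\<Sum>i<d. \<delta> * norm (b i))"
      using x by (intro sum_mono mult_right_mono) (auto simp: I_def PiE_def Pi_def abs_less_iff less_imp_le)
    also have "\<dots> = \<delta> * \<sigma>" unfolding \<sigma>_def by (simp add: sum_distrib_left)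
    also have "\<dots> < 1/2" unfolding \<delta>_def using \<sigma>0 by (simp add: field_simps)
    finally show "x \<in> V 0 (1/2)" unfolding V_def using x by (auto simp: P_def space_PiM PiE_def)
  qed
  interpret product_sigma_finite "\<lambda>_. lborel :: real measure" by standard
  have "emeasure P (PiE I (\<lambda>_. {-\<delta><..<\<delta>})) = (\<Prod>i\<in>I. ennreal (2 * \<delta>))"
    unfolding P_def using \<delta>0 by (subst emeasure_PiM[OF fI]) (auto simp: emeasure_lborel_Ioo)
  also have "\<dots> > 0" using \<delta>0 by (simp, subst ennreal_power) auto
  finally have pos: "emeasure P (V 0 (1/2)) > 0"
    using emeasure_mono[OF boxsub Vm] by (meson less_le_trans)
  obtain m where m0: "m > 0" and mb: "\<And>x. m * (\<Sum>i<d. \<bar>x i\<bar>) \<le> norm (E x)"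
    using coord_lower_bound[OF indep] unfolding E_def by blast
  define R where "R = 5 / (2 * m)"
  have subbox: "V 0 (5/2) \<subseteq> PiE I (\<lambda>_. {-R..R})"
  proof
    fix x assume x: "x \<in> V 0 (5/2)"
    have "\<bar>x i\<bar> \<le> R" if "i \<in> I" for i
    proof -
      have "\<bar>x i\<bar> \<le> (\<Sum>i<d. \<bar>x i\<bar>)"
        using that member_le_sum[of i "{..<d}" "\<lambda>i. \<bar>x i\<bar>"] unfolding I_def by auto
      also have "\<dots> \<le> norm (E x) / m" using mb[of x] m0 by (simp add: field_simps)
      also have "\<dots> \<le> R" using x m0 unfolding V_def R_def by (simp add: field_simps)
      finally show ?thesis .
    qed
    then show "x \<in> PiE I (\<lambda>_. {-R..R})" using x unfolding V_def
      by (auto simp: P_def space_PiM PiE_def Pi_def abs_le_iff) (smt (verit))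
  qed
  have R0: "R > 0" unfolding R_def using m0 by simp
  have "emeasure P (PiE I (\<lambda>_. {-R..R})) = (\<Prod>i\<in>I. ennreal (2 * R))"
    unfolding P_def using R0 by (subst emeasure_PiM[OF fI]) auto
  also have "\<dots> = ennreal ((2 * R) ^ card I)" using R0 by (simp add: ennreal_power)
  also have "\<dots> < \<infinity>" by simp
  moreover have "PiE I (\<lambda>_. {-R..R}) \<in> sets P" unfolding P_def using fI by (intro sets_PiM_I_finite) auto
  ultimately have "emeasure P (V 0 (5/2)) < \<infinity>"
    using emeasure_mono[OF subbox, of P] by (metis le_less_trans)
  then have "ennreal (5 ^ d) * emeasure P (V 0 (1/2)) < \<infinity>" using scal[of "1/2"] by simp
  then have fin: "emeasure P (V 0 (1/2)) < \<infinity>"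
    by (auto simp: ennreal_mult_less_top top.not_eq_extremum)
  have disj: "disjoint_family_on (\<lambda>s. V s (1/2)) S"
    unfolding disjoint_family_on_def
  proof (intro ballI impI)
    fix s t assume st: "s \<in> S" "t \<in> S" "s \<noteq> t"
    show "V s (1/2) \<inter> V t (1/2) = {}"
    proof (rule ccontr)
      assume "V s (1/2) \<inter> V t (1/2) \<noteq> {}"
      then obtain x where "norm (E x - s) < 1/2" "norm (E x - t) < 1/2" unfolding V_def by auto
      then have "norm (s - t) < 1" using norm_triangle_ineq4[of "E x - t" "E x - s"]
        by (simp add: norm_minus_commute)
      with S(3)[OF st] show False by simp
    qed
  qed
  have un: "(\<Union>s\<in>S. V s (1/2)) \<subseteq> V 0 (5 * (1/2))"
  proof safe
    fix s x assume s: "s \<in> S" and x: "x \<in> V s (1/2)"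
    have "norm (E x) \<le> norm (E x - s) + norm s" using norm_triangle_sub[of "E x" s] by simp
    also have "\<dots> < 1/2 + 2" using x S(2)[OF s] unfolding V_def by simp
    finally show "x \<in> V 0 (5 * (1/2))" using x unfolding V_def by simp
  qed
  have "(\<Sum>s\<in>S. emeasure P (V s (1/2))) = (\<Sum>s\<in>S. emeasure P (V 0 (1/2)))"
    by (rule sum.cong[OF refl trans])
  then have "ennreal (real (card S)) * emeasure P (V 0 (1/2)) = (\<Sum>s\<in>S. emeasure P (V s (1/2)))"
    by (simp add: ennreal_of_nat_eq_real_of_nat)
  also have "\<dots> = emeasure P (\<Union>s\<in>S. V s (1/2))"
    using S(1) disj Vm by (intro sum_emeasure) auto
  also have "\<dots> \<le> emeasure P (V 0 (5 * (1/2)))" using un Vm by (intro emeasure_mono) auto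
  also have "\<dots> = ennreal (5 ^ d) * emeasure P (V 0 (1/2))" by (rule scal)
  finally have ineq: "ennreal (real (card S)) * emeasure P (V 0 (1/2)) \<le> ennreal (5 ^ d) * emeasure P (V 0 (1/2))" .
  obtain q where q: "emeasure P (V 0 (1/2)) = ennreal q" "q > 0"
    using pos fin by (cases "emeasure P (V 0 (1/2))") (auto simp: ennreal_less_zero_iff)
  have "real (card S) * q \<le> 5 ^ d * q"
    using ineq q by (simp add: ennreal_mult'[symmetric])
  then have "real (card S) \<le> 5 ^ d" using q(2) by simp
  then show ?thesis by (simp add: of_nat_le_iff[symmetric])
qed

lemma basis_coords:
  fixes B :: "'a::real_normed_vector set"
  assumes "finite B" "independent B" "span B = UNIV" "card B = d"
  obtains b :: "nat \<Rightarrow> 'a" where "\<And>x. (\<Sum>i<d. x i *\<^sub>R b i) = 0 \<Longrightarrow> \<forall>i<d. x i = 0"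
    "\<And>v. \<exists>x. v = (\<Sum>i<d. x i *\<^sub>R b i)"
proof -
  obtain b where bij: "bij_betw b {..<d} B"
    using ex_bij_betw_nat_finite[OF assms(1)] assms(4) by (auto simp: atLeast0LessThan)
  have re: "(\<Sum>v\<in>B. g v) = (\<Sum>i<d. g (b i))" for g :: "'a \<Rightarrow> 'a"
    using sum.reindex_bij_betw[OF bij, of g] by simp
  have "\<forall>i<d. x i = 0" if x: "(\<Sum>i<d. x i *\<^sub>R b i) = 0" for x
  proof (intro allI impI)
    fix i assume i: "i < d"
    define u where "u v = x (inv_into {..<d} b v)" for v
    have ub: "u (b j) = x j" if "j < d" for j
      unfolding u_def using bij that by (simp add: bij_betw_inv_into_left)
    have "(\<Sum>v\<in>B. u v *\<^sub>R v) = (\<Sum>j<d. u (b j) *\<^sub>R b j)" by (rule re)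
    also have "\<dots> = (\<Sum>j<d. x j *\<^sub>R b j)" by (intro sum.cong) (auto simp: ub)
    finally have "(\<Sum>v\<in>B. u v *\<^sub>R v) = 0" using x by simp
    moreover have "b i \<in> B" using bij i by (auto simp: bij_betw_def)
    ultimately have "u (b i) = 0"
      using real_vector.independentD[OF assms(2) assms(1) order_refl] by blast
    then show "x i = 0" using ub[OF i] by simp
  qed
  moreover have "\<exists>x. v = (\<Sum>i<d. x i *\<^sub>R b i)" for v
  proof -
    have "v \<in> span B" using assms(3) by simp
    then obtain u where "v = (\<Sum>w\<in>B. u w *\<^sub>R w)"
      using real_vector.span_finite[OF assms(1)] by auto
    then have "v = (\<Sum>i<d. (u \<circ> b) i *\<^sub>R b i)" using re by simp
    then show ?thesis by (intro exI[of _ "u \<circ> b"])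
  qed
  ultimately show ?thesis using that by blast
qed

definition tr :: "'a::real_normed_vector \<Rightarrow> 'a" where
  "tr v = (if norm v \<le> 2 then v else (2 / norm v) *\<^sub>R v)"

lemma tr_norm:
  fixes v :: "'a::real_normed_vector"
  assumes "1 \<le> norm v" shows "1 \<le> norm (tr v)" "norm (tr v) \<le> 2"
  using assms by (auto simp: tr_def)

lemma sep_big:
  fixes y z :: "'a::real_normed_vector"
  assumes a: "2 < norm y" and ab: "norm y \<le> norm z" and yz: "norm z - 1 \<le> norm (y - z)"
  shows "1 \<le> norm ((2 / norm y) *\<^sub>R y - (2 / norm z) *\<^sub>R z)"
proof -
  define a b where "a = norm y" "b = norm z"
  have a0: "a > 2" "b > 2" "a \<le> b" using a ab unfolding a_b_def by auto
  have eq: "(2 / a) *\<^sub>R y - (2 / b) *\<^sub>R z = (2 / a) *\<^sub>R (y - z) + (2 / a - 2 / b) *\<^sub>R z"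
    by (simp add: algebra_simps)
  have c: "2 / b \<le> 2 / a" using a0 by (simp add: frac_le)
  have "norm ((2 / a) *\<^sub>R (y - z)) - norm ((2 / a - 2 / b) *\<^sub>R z) \<le> norm ((2 / a) *\<^sub>R y - (2 / b) *\<^sub>R z)"
    unfolding eq by (metis norm_diff_ineq)
  moreover have "norm ((2 / a) *\<^sub>R (y - z)) = (2 / a) * norm (y - z)" using a0 by simp
  moreover have "norm ((2 / a - 2 / b) *\<^sub>R z) = (2 / a - 2 / b) * b" using c unfolding a_b_def by simp
  moreover have "(2 / a) * norm (y - z) \<ge> (2 / a) * (b - 1)"
    using yz a0 unfolding a_b_def by (intro mult_left_mono) auto
  moreover have "(2 / a) * (b - 1) - (2 / a - 2 / b) * b = 2 - 2 / a" using a0 by (simp add: field_simps)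
  moreover have "2 - 2 / a \<ge> 1" using a0 by (simp add: field_simps)
  ultimately show ?thesis unfolding a_b_def by linarith
qed

lemma sep_mixed:
  fixes y z :: "'a::real_normed_vector"
  assumes a: "norm y \<le> 2" and b: "2 < norm z" and yz: "norm z - 1 \<le> norm (y - z)"
  shows "1 \<le> norm (y - (2 / norm z) *\<^sub>R z)"
proof -
  define bb where "bb = norm z"
  have eq: "y - (2 / bb) *\<^sub>R z = (y - z) + (1 - 2 / bb) *\<^sub>R z" by (simp add: algebra_simps)
  have c: "2 / bb \<le> 1" using b unfolding bb_def by (simp add: divide_le_eq)
  have "norm (y - z) - norm ((1 - 2 / bb) *\<^sub>R z) \<le> norm (y - (2 / bb) *\<^sub>R z)"
    unfolding eq by (metis norm_diff_ineq)
  moreover have "norm ((1 - 2 / bb) *\<^sub>R z) = (1 - 2 / bb) * bb" using c unfolding bb_def by simp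
  moreover have "(1 - 2 / bb) * bb = bb - 2" using b unfolding bb_def by (auto simp: field_simps)
  ultimately show ?thesis using yz unfolding bb_def by linarith
qed

lemma tr_sep:
  fixes y z :: "'a::real_normed_vector"
  assumes s: "1 \<le> s" and t: "1 \<le> t" and ys: "norm y \<le> 1 + s" and zt: "norm z \<le> 1 + t"
    and yz: "max s t \<le> norm (y - z)"
  shows "1 \<le> norm (tr y - tr z)"
proof (cases "norm y \<le> 2")
  case y: True
  show ?thesis
  proof (cases "norm z \<le> 2")
    case True then show ?thesis using y yz s by (simp add: tr_def)
  next
    case False
    then show ?thesis using y sep_mixed[of y z] yz zt by (simp add: tr_def)
  qed
next
  case y: False
  show ?thesis
  proof (cases "norm z \<le> 2")
    case True
    have "1 \<le> norm (z - (2 / norm y) *\<^sub>R y)" using True y sep_mixed[of z y] yz ys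
      by (simp add: norm_minus_commute)
    then show ?thesis using True y by (simp add: tr_def norm_minus_commute)
  next
    case False
    show ?thesis
    proof (cases "norm y \<le> norm z")
      case True
      then show ?thesis using y False sep_big[of y z] yz zt by (simp add: tr_def)
    next
      case nle: False
      have "1 \<le> norm ((2 / norm z) *\<^sub>R z - (2 / norm y) *\<^sub>R y)"
        using y False nle sep_big[of z y] yz ys by (simp add: norm_minus_commute)
      then show ?thesis using y False by (simp add: tr_def norm_minus_commute)
    qed
  qed
qed

lemma rad_facts:
  fixes c :: "nat \<Rightarrow> 'a::real_normed_vector"
  assumes inj: "inj_on c {1..n}" and nk: "n \<ge> k + 1" and k: "k \<ge> 1" and i: "i \<in> {1..n}"
  shows "0 < soi_radius k n c i"
    "card {j \<in> {1..n}. j \<noteq> i \<and> norm (c i - c j) < soi_radius k n c i} < k"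
proof -
  define T where "T = {r. r \<ge> 0 \<and> card {j \<in> {1..n}. j \<noteq> i \<and> norm (c i - c j) \<le> r} \<ge> k}"
  have R: "soi_radius k n c i = Inf T" unfolding soi_radius_def T_def by simp
  have bdd: "bdd_below T" unfolding T_def by (auto intro: bdd_belowI[of _ 0])
  show "card {j \<in> {1..n}. j \<noteq> i \<and> norm (c i - c j) < soi_radius k n c i} < k"
  proof (rule ccontr)
    define Ob0 where "Ob0 = {j \<in> {1..n}. j \<noteq> i \<and> norm (c i - c j) < soi_radius k n c i}"
    assume "\<not> ?thesis"
    then have cO: "card Ob0 \<ge> k" unfolding Ob0_def by simp
    have fO: "finite Ob0" unfolding Ob0_def by simp
    have neO: "Ob0 \<noteq> {}" using cO k by auto
    define \<rho> where "\<rho> = Max ((\<lambda>j. norm (c i - c j)) ` Ob0)"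
    have "\<rho> \<in> (\<lambda>j. norm (c i - c j)) ` Ob0" unfolding \<rho>_def using fO neO by (intro Max_in) auto
    then have \<rho>lt: "\<rho> < soi_radius k n c i" and \<rho>0: "\<rho> \<ge> 0" unfolding Ob0_def by auto
    have "Ob0 \<subseteq> {j \<in> {1..n}. j \<noteq> i \<and> norm (c i - c j) \<le> \<rho>}"
      unfolding \<rho>_def using fO by (auto simp: Ob0_def intro: Max_ge)
    then have "card Ob0 \<le> card {j \<in> {1..n}. j \<noteq> i \<and> norm (c i - c j) \<le> \<rho>}"
      by (intro card_mono) auto
    then have "\<rho> \<in> T" unfolding T_def using cO \<rho>0 by auto
    then have "Inf T \<le> \<rho>" using bdd by (rule cInf_lower)
    then show False using \<rho>lt R by simp
  qed
  define N' where "N' = {1..n} - {i}"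
  have fN': "finite N'" unfolding N'_def by simp
  have cN': "card N' = n - 1" unfolding N'_def using i by simp
  have neN': "N' \<noteq> {}" using cN' nk k by auto
  define \<delta> where "\<delta> = Min ((\<lambda>j. norm (c i - c j)) ` N')"
  have "\<delta> \<in> (\<lambda>j. norm (c i - c j)) ` N'" unfolding \<delta>_def using fN' neN' by (intro Min_in) auto
  then obtain j0 where j0: "j0 \<in> N'" "\<delta> = norm (c i - c j0)" by blast
  have "j0 \<in> {1..n}" "j0 \<noteq> i" using j0(1) unfolding N'_def by auto
  then have "c i \<noteq> c j0" using inj_onD[OF inj _ i] by metis
  then have \<delta>0: "\<delta> > 0" using j0 by simp
  define r0 where "r0 = (\<Sum>j\<in>{1..n}. norm (c i - c j))"
  have le0: "norm (c i - c j) \<le> r0" if "j \<in> {1..n}" for j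
    unfolding r0_def using member_le_sum[of j "{1..n}" "\<lambda>j. norm (c i - c j)"] that by simp
  have "{j \<in> {1..n}. j \<noteq> i \<and> norm (c i - c j) \<le> r0} = N'"
    unfolding N'_def using le0 by blast
  moreover have "r0 \<ge> 0" unfolding r0_def by (simp add: sum_nonneg)
  ultimately have "r0 \<in> T" unfolding T_def using cN' nk by simp
  then have neT: "T \<noteq> {}" by auto
  have "\<delta> \<le> Inf T"
  proof (rule cInf_greatest[OF neT])
    fix r assume r: "r \<in> T"
    show "\<delta> \<le> r"
    proof (rule ccontr)
      assume "\<not> \<delta> \<le> r"
      have "j \<notin> {j \<in> {1..n}. j \<noteq> i \<and> norm (c i - c j) \<le> r}" for j
      proof
        assume j: "j \<in> {j \<in> {1..n}. j \<noteq> i \<and> norm (c i - c j) \<le> r}"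
        then have "j \<in> N'" unfolding N'_def by auto
        then have "\<delta> \<le> norm (c i - c j)" unfolding \<delta>_def using fN' by (intro Min_le) auto
        then show False using j \<open>\<not> \<delta> \<le> r\<close> by auto
      qed
      then have "{j \<in> {1..n}. j \<noteq> i \<and> norm (c i - c j) \<le> r} = {}" by blast
      then have "card {j \<in> {1..n}. j \<noteq> i \<and> norm (c i - c j) \<le> r} = 0" by (simp only: card.empty)
      moreover have "k \<le> card {j \<in> {1..n}. j \<noteq> i \<and> norm (c i - c j) \<le> r}"
        using r unfolding T_def by blast
      ultimately show False using k by linarith
    qed
  qed
  then show "0 < soi_radius k n c i" using \<delta>0 R by simp
qed

lemma adj_dist:
  "soi_adj k n c i j \<Longrightarrow> norm (c i - c j) \<le> soi_radius k n c i + soi_radius k n c j"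
proof -
  assume "soi_adj k n c i j"
  then obtain x where "norm (x - c i) \<le> soi_radius k n c i" "norm (x - c j) \<le> soi_radius k n c j"
    unfolding soi_adj_def closed_ball_def by auto
  moreover have "norm (c i - c j) \<le> norm (x - c i) + norm (x - c j)"
    using norm_triangle_ineq4[of "x - c j" "x - c i"] by (simp add: norm_minus_commute)
  ultimately show ?thesis by linarith
qed

lemma adj_sym: "soi_adj k n c i j \<Longrightarrow> soi_adj k n c j i"
  unfolding soi_adj_def by auto

lemma greedy:
  fixes x :: "nat \<Rightarrow> 'a::real_normed_vector" and \<rho> :: "nat \<Rightarrow> real"
  assumes "finite Q" "Q \<subseteq> N" "j \<notin> Q"
  shows "\<exists>P \<subseteq> Q. (\<forall>p\<in>P. \<rho> j \<le> norm (x p - x j)) \<and>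
     (\<forall>p\<in>P. \<forall>q\<in>P. p \<noteq> q \<longrightarrow> max (\<rho> p) (\<rho> q) \<le> norm (x p - x q)) \<and>
     Q \<subseteq> (\<Union>p\<in>insert j P. insert p {q \<in> N. q \<noteq> p \<and> norm (x p - x q) < \<rho> p})"
  using assms
proof (induction Q rule: finite_psubset_induct)
  case (psubset Q)
  define Ob where "Ob p = {q \<in> N. q \<noteq> p \<and> norm (x p - x q) < \<rho> p}" for p
  show ?case
  proof (cases "Q = {}")
    case True then show ?thesis by auto
  next
    case False
    define m where "m = Max (\<rho> ` Q)"
    have "m \<in> \<rho> ` Q" unfolding m_def using psubset False by (intro Max_in) auto
    then obtain i where i: "i \<in> Q" "\<rho> i = m" by auto
    have imax: "\<rho> q \<le> \<rho> i" if "q \<in> Q" for q using that psubset(1) i unfolding m_def by auto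
    show ?thesis
    proof (cases "norm (x i - x j) < \<rho> j")
      case True
      have "\<exists>P\<subseteq>Q - {i}. (\<forall>p\<in>P. \<rho> j \<le> norm (x p - x j)) \<and>
     (\<forall>p\<in>P. \<forall>q\<in>P. p \<noteq> q \<longrightarrow> max (\<rho> p) (\<rho> q) \<le> norm (x p - x q)) \<and>
     Q - {i} \<subseteq> (\<Union>p\<in>insert j P. insert p {q \<in> N. q \<noteq> p \<and> norm (x p - x q) < \<rho> p})"
        by (rule psubset.IH) (use i psubset.prems in auto)
      then obtain P where P: "P \<subseteq> Q - {i}"
        "\<forall>p\<in>P. \<rho> j \<le> norm (x p - x j)"
        "\<forall>p\<in>P. \<forall>q\<in>P. p \<noteq> q \<longrightarrow> max (\<rho> p) (\<rho> q) \<le> norm (x p - x q)"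
        "Q - {i} \<subseteq> (\<Union>p\<in>insert j P. insert p (Ob p))" unfolding Ob_def by blast
      have "i \<in> Ob j" unfolding Ob_def using True i psubset.prems by (auto simp: norm_minus_commute)
      then have "Q \<subseteq> (\<Union>p\<in>insert j P. insert p (Ob p))" using P(4) by auto
      then show ?thesis using P(1,2,3) unfolding Ob_def by (intro exI[of _ P]) auto
    next
      case False
      have "\<exists>P\<subseteq>Q - {i} - Ob i. (\<forall>p\<in>P. \<rho> j \<le> norm (x p - x j)) \<and>
     (\<forall>p\<in>P. \<forall>q\<in>P. p \<noteq> q \<longrightarrow> max (\<rho> p) (\<rho> q) \<le> norm (x p - x q)) \<and>
     Q - {i} - Ob i \<subseteq> (\<Union>p\<in>insert j P. insert p {q \<in> N. q \<noteq> p \<and> norm (x p - x q) < \<rho> p})"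
        by (rule psubset.IH) (use i psubset.prems in auto)
      then obtain P where P: "P \<subseteq> Q - {i} - Ob i"
        "\<forall>p\<in>P. \<rho> j \<le> norm (x p - x j)"
        "\<forall>p\<in>P. \<forall>q\<in>P. p \<noteq> q \<longrightarrow> max (\<rho> p) (\<rho> q) \<le> norm (x p - x q)"
        "Q - {i} - Ob i \<subseteq> (\<Union>p\<in>insert j P. insert p (Ob p))" unfolding Ob_def by blast
      have far: "max (\<rho> i) (\<rho> p) \<le> norm (x i - x p)" if "p \<in> P" for p
      proof -
        have "p \<in> Q" "p \<noteq> i" "p \<notin> Ob i" using P(1) that by auto
        then have "\<rho> i \<le> norm (x i - x p)" using psubset.prems unfolding Ob_def by auto
        moreover have "\<rho> p \<le> \<rho> i" using imax \<open>p \<in> Q\<close> by auto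
        ultimately show ?thesis by simp
      qed
      have cov: "Q \<subseteq> (\<Union>p\<in>insert j (insert i P). insert p (Ob p))" using P(4) by auto
      have sub: "insert i P \<subseteq> Q" using P(1) i by auto
      have pw: "\<forall>p\<in>insert i P. \<forall>q\<in>insert i P. p \<noteq> q \<longrightarrow> max (\<rho> p) (\<rho> q) \<le> norm (x p - x q)"
      proof (intro ballI impI)
        fix p q assume pq: "p \<in> insert i P" "q \<in> insert i P" "p \<noteq> q"
        show "max (\<rho> p) (\<rho> q) \<le> norm (x p - x q)"
        proof (cases "p = i")
          case True then show ?thesis using far[of q] pq by auto
        next
          case pi: False
          show ?thesis
          proof (cases "q = i")
            case True
            then have "p \<in> P" using pq pi by auto
            then show ?thesis using far[of p] True by (metis max.commute norm_minus_commute)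
          next
            case False
            then show ?thesis using pq pi P(3) by auto
          qed
        qed
      qed
      have jc: "\<forall>p\<in>insert i P. \<rho> j \<le> norm (x p - x j)" using P(2) False by auto
      show ?thesis using sub pw jc cov unfolding Ob_def by blast
    qed
  qed
qed

lemma theta_facts:
  assumes pack: "\<And>S::'a::real_normed_vector set. finite S \<Longrightarrow> (\<And>s. s \<in> S \<Longrightarrow> norm s \<le> 2) \<Longrightarrow>
      (\<And>x y. x \<in> S \<Longrightarrow> y \<in> S \<Longrightarrow> x \<noteq> y \<Longrightarrow> norm (x - y) \<ge> 1) \<Longrightarrow> card S \<le> 5 ^ d"
  shows "\<And>S::'a set. finite S \<Longrightarrow> 0 \<in> S \<Longrightarrow> S \<subseteq> closed_ball 0 2 \<Longrightarrow>
      (\<forall>x\<in>S. \<forall>y\<in>S. x \<noteq> y \<longrightarrow> norm (x - y) \<ge> 1) \<Longrightarrow> card S \<le> theta TYPE('a)"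
    and "theta TYPE('a) \<le> 5 ^ d"
proof -
  define SS where "SS = {card S | S :: 'a set. finite S \<and> 0 \<in> S \<and> S \<subseteq> closed_ball 0 2 \<and>
       (\<forall>x\<in>S. \<forall>y\<in>S. x \<noteq> y \<longrightarrow> norm (x - y) \<ge> 1)}"
  have th: "theta TYPE('a) = Sup SS" unfolding theta_def SS_def by simp
  have ub: "m \<le> 5 ^ d" if mS: "m \<in> SS" for m
  proof -
    obtain S :: "'a set" where S: "m = card S" "finite S" "S \<subseteq> closed_ball 0 2"
      "\<forall>x\<in>S. \<forall>y\<in>S. x \<noteq> y \<longrightarrow> norm (x - y) \<ge> 1"
      using mS unfolding SS_def by blast
    have "card S \<le> 5 ^ d"
      by (rule pack) (use S in \<open>auto simp: closed_ball_def\<close>)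
    then show ?thesis using S by simp
  qed
  have bdd: "bdd_above SS" using ub by (intro bdd_aboveI) auto
  have "card {0::'a} \<in> SS" unfolding SS_def by (intro CollectI exI[of _ "{0::'a}"]) (auto simp: closed_ball_def)
  then have ne: "SS \<noteq> {}" by auto
  show "theta TYPE('a) \<le> 5 ^ d" unfolding th using ne ub by (intro cSup_least) auto
  fix S :: "'a set"
  assume "finite S" "0 \<in> S" "S \<subseteq> closed_ball 0 2" "\<forall>x\<in>S. \<forall>y\<in>S. x \<noteq> y \<longrightarrow> norm (x - y) \<ge> 1"
  then have "card S \<in> SS" unfolding SS_def by blast
  then show "card S \<le> theta TYPE('a)" unfolding th using bdd by (rule cSup_upper)
qed

lemma max_div: "r > 0 \<Longrightarrow> max (a / r) (b / r) = max a b / (r::real)"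
  by (simp add: max_def divide_le_cancel)

lemma vertex_bound:
  fixes c :: "nat \<Rightarrow> 'a::real_normed_vector"
  assumes inj: "inj_on c {1..n}" and nk: "n \<ge> k + 1" and k: "k \<ge> 1" and j: "j \<in> {1..n}"
    and th: "\<And>S::'a set. finite S \<Longrightarrow> 0 \<in> S \<Longrightarrow> S \<subseteq> closed_ball 0 2 \<Longrightarrow>
      (\<forall>x\<in>S. \<forall>y\<in>S. x \<noteq> y \<longrightarrow> norm (x - y) \<ge> 1) \<Longrightarrow> card S \<le> \<theta>"
  shows "card {i \<in> {1..n}. i \<noteq> j \<and> soi_radius k n c j \<le> soi_radius k n c i \<and> soi_adj k n c i j} + 1 \<le> k * \<theta>"
proof -
  define R where "R = soi_radius k n c"
  define N where "N = {1..n}"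
  define M where "M = {i \<in> N. i \<noteq> j \<and> R j \<le> R i \<and> soi_adj k n c i j}"
  define Ob where "Ob p = {q \<in> N. q \<noteq> p \<and> norm (c p - c q) < R p}" for p
  have fM: "finite M" "M \<subseteq> N" "j \<notin> M" unfolding M_def N_def by auto
  obtain P where P: "P \<subseteq> M" "\<forall>p\<in>P. R j \<le> norm (c p - c j)"
     "\<forall>p\<in>P. \<forall>q\<in>P. p \<noteq> q \<longrightarrow> max (R p) (R q) \<le> norm (c p - c q)"
     "M \<subseteq> (\<Union>p\<in>insert j P. insert p (Ob p))"
    using greedy[OF fM, of R c] unfolding Ob_def by blast
  have fP: "finite P" using P(1) fM(1) finite_subset by blast
  have PN: "insert j P \<subseteq> N" using P(1) fM(2) j unfolding N_def by auto
  have jP: "j \<notin> P" using P(1) fM(3) by auto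
  have cOb: "card (insert p (Ob p)) \<le> k" if "p \<in> N" for p
  proof -
    have "card (Ob p) < k" using rad_facts(2)[OF inj nk k, of p] that unfolding Ob_def R_def N_def by simp
    moreover have "finite (Ob p)" unfolding Ob_def N_def by simp
    ultimately show ?thesis by (simp add: card_insert_if)
  qed
  have "card (insert j M) \<le> card (\<Union>p\<in>insert j P. insert p (Ob p))"
    using P(4) fP by (intro card_mono) (auto simp: Ob_def N_def)
  also have "\<dots> \<le> (\<Sum>p\<in>insert j P. card (insert p (Ob p)))" by (rule card_UN_le) (use fP in simp)
  also have "\<dots> \<le> (\<Sum>p\<in>insert j P. k)" using PN cOb by (intro sum_mono) auto
  also have "\<dots> = k * card (insert j P)" by simp
  finally have c1: "card M + 1 \<le> k * card (insert j P)" using fM by simp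
  have Rj: "R j > 0" unfolding R_def using rad_facts(1)[OF inj nk k j] .
  define y where "y p = (1 / R j) *\<^sub>R (c p - c j)" for p
  define f where "f p = (if p = j then 0 else tr (y p))" for p
  have ny: "norm (y p) = norm (c p - c j) / R j" for p unfolding y_def using Rj by simp
  have props: "1 \<le> norm (y p) \<and> norm (y p) \<le> 1 + R p / R j \<and> 1 \<le> R p / R j" if "p \<in> P" for p
  proof -
    have pM: "p \<in> M" using that P(1) by auto
    then have "R j \<le> R p" "soi_adj k n c p j" unfolding M_def by auto
    then have "norm (c p - c j) \<le> R p + R j" using adj_dist unfolding R_def by blast
    then have "norm (y p) \<le> 1 + R p / R j" unfolding ny using Rj by (simp add: field_simps)
    moreover have "1 \<le> norm (y p)" unfolding ny using Rj P(2) that by simp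
    moreover have "1 \<le> R p / R j" using \<open>R j \<le> R p\<close> Rj by simp
    ultimately show ?thesis by blast
  qed
  have sep: "1 \<le> norm (f p - f q)" if "p \<in> insert j P" "q \<in> insert j P" "p \<noteq> q" for p q
  proof (cases "p = j")
    case True
    then have "q \<in> P" "q \<noteq> j" using that by auto
    then show ?thesis using True tr_norm(1)[of "y q"] props[of q] by (simp add: f_def)
  next
    case pj: False
    show ?thesis
    proof (cases "q = j")
      case True
      then have "p \<in> P" using that pj by auto
      then show ?thesis using True pj tr_norm(1)[of "y p"] props[of p] by (simp add: f_def)
    next
      case qj: False
      then have pq: "p \<in> P" "q \<in> P" using that pj by auto
      have "y p - y q = (1 / R j) *\<^sub>R (c p - c q)" unfolding y_def by (simp add: algebra_simps)
      then have "norm (y p - y q) = norm (c p - c q) / R j" using Rj by simp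
      moreover have "max (R p / R j) (R q / R j) = max (R p) (R q) / R j" using Rj by (rule max_div)
      moreover have "max (R p) (R q) / R j \<le> norm (c p - c q) / R j"
        using P(3) pq that(3) Rj by (simp add: divide_right_mono)
      ultimately have "max (R p / R j) (R q / R j) \<le> norm (y p - y q)" by simp
      then have "1 \<le> norm (tr (y p) - tr (y q))"
        using props[OF pq(1)] props[OF pq(2)] by (intro tr_sep[of "R p / R j" "R q / R j"]) auto
      then show ?thesis using pj qj by (simp add: f_def)
    qed
  qed
  have injf: "inj_on f (insert j P)"
  proof (rule inj_onI)
    fix p q assume "p \<in> insert j P" "q \<in> insert j P" "f p = f q"
    then show "p = q" using sep[of p q] by force
  qed
  have fin2: "norm (f p) \<le> 2" if "p \<in> insert j P" for p
    using that props tr_norm(2) by (auto simp: f_def)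
  define T where "T = f ` insert j P"
  have "card T \<le> \<theta>"
  proof (rule th)
    show "finite T" unfolding T_def using fP by simp
    show "0 \<in> T" unfolding T_def f_def by force
    show "T \<subseteq> closed_ball 0 2" unfolding T_def closed_ball_def using fin2 by auto
    show "\<forall>x\<in>T. \<forall>y\<in>T. x \<noteq> y \<longrightarrow> 1 \<le> norm (x - y)"
      unfolding T_def using sep by fastforce
  qed
  moreover have "card T = card (insert j P)" unfolding T_def using injf by (rule card_image)
  ultimately have "card (insert j P) \<le> \<theta>" by simp
  then have "k * card (insert j P) \<le> k * \<theta>" by (rule mult_le_mono2)
  with c1 have "card M + 1 \<le> k * \<theta>" by linarith
  then show ?thesis unfolding M_def R_def N_def by simp
qed

theorem mainTheorem2:
  fixes B :: "'a::real_normed_vector set" and d k n :: nat and c :: "nat \<Rightarrow> 'a"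
  assumes "finite B" and "independent B" and "span B = UNIV" and "card B = d"
    and "k \<ge> 1"
    and "n \<ge> k + 1"
    and "inj_on c {1..n}"
  shows "int (card (soi_edges k n c)) \<le> (int (theta TYPE('a)) * int k - 1) * int n
       \<and> (int (theta TYPE('a)) * int k - 1) * int n \<le> (5 ^ d * int k - 1) * int n"
proof -
  obtain b :: "nat \<Rightarrow> 'a" where bi: "\<And>x. (\<Sum>i<d. x i *\<^sub>R b i) = 0 \<Longrightarrow> \<forall>i<d. x i = 0"
    and bs: "\<And>v. \<exists>x. v = (\<Sum>i<d. x i *\<^sub>R b i)"
    using basis_coords[OF assms(1-4)] by blast
  have pack: "card S \<le> 5 ^ d" if "finite S" "\<And>s. s \<in> S \<Longrightarrow> norm s \<le> 2"
      "\<And>x y. x \<in> S \<Longrightarrow> y \<in> S \<Longrightarrow> x \<noteq> y \<Longrightarrow> norm (x - y) \<ge> 1" for S :: "'a set"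
    by (rule packing[OF bi bs that])
  note thf = theta_facts[OF pack]
  define \<theta> where "\<theta> = theta TYPE('a)"
  define M where "M j = {i \<in> {1..n}. i \<noteq> j \<and> soi_radius k n c j \<le> soi_radius k n c i \<and> soi_adj k n c i j}" for j
  have vb: "card (M j) + 1 \<le> k * \<theta>" if "j \<in> {1..n}" for j
    unfolding M_def \<theta>_def by (rule vertex_bound[OF assms(7,6,5) that thf(1)])
  have "(1::nat) \<in> {1..n}" using assms(5,6) by simp
  then have "card (M 1) + 1 \<le> k * \<theta>" by (rule vb)
  then have kt: "k * \<theta> \<ge> 1" by linarith
  have sub: "soi_edges k n c \<subseteq> (\<Union>j\<in>{1..n}. (\<lambda>i. {i, j}) ` M j)"
  proof
    fix e assume "e \<in> soi_edges k n c"
    then obtain i j where e: "e = {i, j}" and adj: "soi_adj k n c i j" unfolding soi_edges_def by blast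
    have ij: "i \<in> {1..n}" "j \<in> {1..n}" "i \<noteq> j" using adj unfolding soi_adj_def by auto
    show "e \<in> (\<Union>j\<in>{1..n}. (\<lambda>i. {i, j}) ` M j)"
    proof (cases "soi_radius k n c j \<le> soi_radius k n c i")
      case True
      then have "i \<in> M j" unfolding M_def using ij adj by auto
      then show ?thesis using e ij by blast
    next
      case False
      then have "j \<in> M i" unfolding M_def using ij adj_sym[OF adj] by auto
      then have "{j, i} \<in> (\<lambda>q. {q, i}) ` M i" by blast
      then have "e \<in> (\<lambda>q. {q, i}) ` M i" using e by (simp add: insert_commute)
      then show ?thesis using ij(1) by blast
    qed
  qed
  have "card (soi_edges k n c) \<le> card (\<Union>j\<in>{1..n}. (\<lambda>i. {i, j}) ` M j)"
    using sub by (intro card_mono) (auto simp: M_def)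
  also have "\<dots> \<le> (\<Sum>j\<in>{1..n}. card ((\<lambda>i. {i, j}) ` M j))" by (rule card_UN_le) simp
  also have "\<dots> \<le> (\<Sum>j\<in>{1..n}. card (M j))" by (intro sum_mono card_image_le) (auto simp: M_def)
  also have "\<dots> \<le> (\<Sum>j\<in>{1..n}. k * \<theta> - 1)" proof (rule sum_mono)
    fix j assume "j \<in> {1..n}"
    from vb[OF this] show "card (M j) \<le> k * \<theta> - 1" by linarith
  qed
  also have "\<dots> = n * (k * \<theta> - 1)" by simp
  finally have "int (card (soi_edges k n c)) \<le> int (n * (k * \<theta> - 1))" by (simp only: of_nat_le_iff)
  also have "\<dots> = (int \<theta> * int k - 1) * int n" using kt by (simp add: of_nat_diff algebra_simps)
  finally have part1: "int (card (soi_edges k n c)) \<le> (int \<theta> * int k - 1) * int n" .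
  have "\<theta> \<le> 5 ^ d" unfolding \<theta>_def by (rule thf(2))
  then have "int \<theta> * int k \<le> 5 ^ d * int k"
    by (intro mult_right_mono) (auto simp: of_nat_le_iff[symmetric] simp del: of_nat_le_iff)
  then have "(int \<theta> * int k - 1) * int n \<le> (5 ^ d * int k - 1) * int n"
    by (intro mult_right_mono) auto
  with part1 show ?thesis unfolding \<theta>_def by simp
qed

end
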